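(* Let $I:(0,1)\to(0,1)$ be a nondecreasing function. Then $\|S_If\|_{L^\infty}\lesssim\|f\|_{L^\infty}$ and $\|S_If\|_{m_I}\lesssim\|f\|_{m_I}$ for all $f\in\mathcal M_+(0,1)$; that is, $S_I$ is bounded on $L^\infty$ and on $m_I$.
   Context: $\mathcal M_+(0,1)$: nonnegative measurable functions on $(0,1)$; $f^*$ the nonincreasing rearrangement. $S_If(t)=\frac1{I(t)}\sup_{0<s\le t}I(s)f^*(s)$ for $t\in(0,1)$. $\|f\|_{m_I}=\sup_{0<t<1}I(t)f^*(t)$. $A\lesssim B$ means $A\le CB$ with $C$ independent of $f$. *)

theory Defs
  imports "HOL-Analysis.Analysis"
begin

text \<open>Functions in M_+(0,1) are modelled as Borel measurable f :: real => ennreal;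
  only their values on the open interval (0,1) are used.\<close>

definition distrib_fn :: "(real \<Rightarrow> ennreal) \<Rightarrow> ennreal \<Rightarrow> ennreal" where
  "distrib_fn f lam = emeasure lborel {x \<in> {0<..<1}. f x > lam}"

definition rearr :: "(real \<Rightarrow> ennreal) \<Rightarrow> real \<Rightarrow> ennreal" where
  "rearr f t = Inf {lam. distrib_fn f lam \<le> ennreal t}"

definition S_op :: "(real \<Rightarrow> real) \<Rightarrow> (real \<Rightarrow> ennreal) \<Rightarrow> real \<Rightarrow> ennreal" where
  "S_op I f t = (if t \<in> {0<..<1}
      then (SUP s\<in>{0<..t}. ennreal (I s) * rearr f s) / ennreal (I t) else 0)"

definition Linf_norm :: "(real \<Rightarrow> ennreal) \<Rightarrow> ennreal" where
  "Linf_norm f = Inf {c. emeasure lborel {x \<in> {0<..<1}. f x > c} = 0}"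

definition mI_norm :: "(real \<Rightarrow> real) \<Rightarrow> (real \<Rightarrow> ennreal) \<Rightarrow> ennreal" where
  "mI_norm I f = (SUP t\<in>{0<..<1}. ennreal (I t) * rearr f t)"

end

theory Submission
  imports Defs
begin

lemma rearr_le:
  assumes "distrib_fn g c \<le> ennreal t"
  shows "rearr g t \<le> c"
  unfolding rearr_def using assms by (intro Inf_lower) simp

lemma rearr_le_Linf:
  assumes "0 \<le> s"
  shows "rearr f s \<le> Linf_norm f"
  unfolding Linf_norm_def
proof (rule Inf_greatest)
  fix c assume "c \<in> {c. emeasure lborel {x \<in> {0<..<1}. f x > c} = 0}"
  then have "distrib_fn f c \<le> ennreal s" unfolding distrib_fn_def by simp
  then show "rearr f s \<le> c" by (rule rearr_le)
qed

lemma Linf_le: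
  assumes "\<And>x. x \<in> {0<..<1} \<Longrightarrow> g x \<le> c"
  shows "Linf_norm g \<le> c"
  unfolding Linf_norm_def
proof (rule Inf_lower)
  have "{x \<in> {0<..<1}. g x > c} = {}" using assms by (auto simp: not_less[symmetric])
  then show "c \<in> {c. emeasure lborel {x \<in> {0<..<1}. g x > c} = 0}"
    by (simp only: mem_Collect_eq emeasure_empty)
qed

lemma S_le_Linf:
  fixes I :: "real \<Rightarrow> real"
  assumes I: "\<forall>t\<in>{0<..<1}. I t \<in> {0<..<1}"
    and m: "mono_on {0<..<1} I"
  shows "S_op I f t \<le> Linf_norm f"
proof (cases "t \<in> {0<..<1}")
  case True
  let ?L = "Linf_norm f"
  have "(SUP s\<in>{0<..t}. ennreal (I s) * rearr f s) \<le> ennreal (I t) * ?L"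
  proof (rule SUP_least)
    fix s assume s: "s \<in> {0<..t}"
    then have "s \<in> {0<..<1}" using True by auto
    then have "I s \<le> I t" using m True s by (auto intro: mono_onD)
    then have "ennreal (I s) \<le> ennreal (I t)" by (rule ennreal_leI)
    moreover have "rearr f s \<le> ?L" using s by (intro rearr_le_Linf) auto
    ultimately show "ennreal (I s) * rearr f s \<le> ennreal (I t) * ?L"
      by (intro mult_mono) auto
  qed
  then have "S_op I f t \<le> ennreal (I t) * ?L / ennreal (I t)"
    unfolding S_op_def using True by (simp add: divide_right_mono_ennreal)
  also have "\<dots> = ?L"
  proof (subst mult.commute, rule mult_divide_eq_ennreal)
    have "I t > 0" using I True by auto
    then show "ennreal (I t) \<noteq> 0" by simp
  qed simp
  finally show ?thesis .
qed (auto simp: S_op_def)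

lemma S_le_mI:
  fixes I :: "real \<Rightarrow> real"
  assumes I: "\<forall>t\<in>{0<..<1}. I t \<in> {0<..<1}"
    and m: "mono_on {0<..<1} I"
    and x: "x \<in> {0<..<1}"
  shows "S_op I f x \<le> mI_norm I f / ennreal (I x)"
proof -
  have "(SUP s\<in>{0<..x}. ennreal (I s) * rearr f s) \<le> mI_norm I f"
    unfolding mI_norm_def
  proof (rule SUP_least)
    fix s assume s: "s \<in> {0<..x}"
    then have "s \<in> {0<..<1}" using x by auto
    then show "ennreal (I s) * rearr f s \<le> (SUP t\<in>{0<..<1}. ennreal (I t) * rearr f t)"
      by (rule SUP_upper)
  qed
  then show ?thesis unfolding S_op_def using x by (simp add: divide_right_mono_ennreal)
qed

lemma mI_bound:
  fixes I :: "real \<Rightarrow> real"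
  assumes I: "\<forall>t\<in>{0<..<1}. I t \<in> {0<..<1}"
    and m: "mono_on {0<..<1} I"
  shows "mI_norm I (S_op I f) \<le> mI_norm I f"
  unfolding mI_norm_def[of I "S_op I f"]
proof (rule SUP_least)
  fix t :: real assume t: "t \<in> {0<..<1}"
  let ?M = "mI_norm I f"
  have sub: "{x \<in> {0<..<1}. S_op I f x > ?M / ennreal (I t)} \<subseteq> {0<..<t}"
  proof
    fix x :: real assume "x \<in> {x \<in> {0<..<1}. S_op I f x > ?M / ennreal (I t)}"
    then have x: "x \<in> {0<..<1}" and gt: "S_op I f x > ?M / ennreal (I t)" by auto
    have "x < t"
    proof (rule ccontr)
      assume "\<not> x < t"
      then have "I t \<le> I x" using m t x by (auto intro: mono_onD)
      moreover have "I t > 0" using I t by auto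
      ultimately have "inverse (I x) \<le> inverse (I t)" by (rule le_imp_inverse_le)
      moreover have "I x > 0" using I x by auto
      ultimately have "inverse (ennreal (I x)) \<le> inverse (ennreal (I t))"
        using \<open>I t > 0\<close> by (simp add: inverse_ennreal ennreal_leI)
      then have "?M / ennreal (I x) \<le> ?M / ennreal (I t)"
        unfolding divide_ennreal_def by (intro mult_mono) auto
      then show False using S_le_mI[OF I m x, of f] gt by simp
    qed
    then show "x \<in> {0<..<t}" using x by auto
  qed
  have "distrib_fn (S_op I f) (?M / ennreal (I t)) \<le> emeasure lborel {0<..<t}"
    unfolding distrib_fn_def by (rule emeasure_mono[OF sub]) simp
  also have "\<dots> = ennreal t" using t by simp
  finally have "rearr (S_op I f) t \<le> ?M / ennreal (I t)" by (rule rearr_le)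
  then have "ennreal (I t) * rearr (S_op I f) t \<le> ennreal (I t) * (?M / ennreal (I t))"
    by (rule mult_left_mono) simp
  also have "\<dots> = ?M"
    by (simp add: ennreal_times_divide, subst mult.commute, rule mult_divide_eq_ennreal)
      (use I t in \<open>auto simp: ennreal_eq_0_iff not_le\<close>)
  finally show "ennreal (I t) * rearr (S_op I f) t \<le> ?M" .
qed

theorem theorem3p4:
  fixes I :: "real \<Rightarrow> real"
  assumes "\<forall>t\<in>{0<..<1}. I t \<in> {0<..<1}"
    and "mono_on {0<..<1} I"
  shows "\<exists>C::real. C > 0 \<and>
    (\<forall>f \<in> borel_measurable lborel.
       Linf_norm (S_op I f) \<le> ennreal C * Linf_norm f \<and>
       mI_norm I (S_op I f) \<le> ennreal C * mI_norm I f)"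
proof (intro exI[of _ 1] conjI ballI)
  fix f :: "real \<Rightarrow> ennreal"
  show "Linf_norm (S_op I f) \<le> ennreal 1 * Linf_norm f"
    using Linf_le[of "S_op I f" "Linf_norm f"] S_le_Linf[OF assms] by simp
  show "mI_norm I (S_op I f) \<le> ennreal 1 * mI_norm I f"
    using mI_bound[OF assms] by simp
qed simp

end
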